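(* Let $\mathcal D=\mathcal Z=\{0,1\}$, suppose Assumptions 1–4 hold, and suppose that $$4\,f_{0,0}(y_0)\,f_{1,1}(y_1)>\Big(\frac{\overline\lambda}{\underline\lambda}\Big)^{p+1}\big(f_{0,1}(y_0)+f_{1,0}(y_1)\big)^2$$ for Lebesgue-almost all $(y_0,y_1)\in\mathcal Y_0\times\mathcal Y_1$. Then for each $d\in\mathcal D$, $$\mathcal Y_d=\bigcup_{z\in\mathcal Z}\overline{\{y\in\mathbb R^p: f_{d,z}(y)>0\}}.$$
   Context: Setting: $\mathcal U\subset\mathbb R^p$ compact convex with piecewise $C^1$ boundary; $\mu$ a probability measure with support $\mathcal U$, absolutely continuous w.r.t. Lebesgue measure. Assumption 1 consists of (A1)–(A5): (A1) for each $d\in\mathcal D$, $U_d\mid X\sim\mu$ and $Y_d=q_d^\ast(U_d,X)$ for a function $q_d^\ast$ continuously differentiable in its first argument with derivative $Dq_d^\ast$ symmetric positive definite on $\mathrm{Int}(\mathcal U)\times\mathcal X$; (A2) $U_d$ independent of $Z$ given $X$; (A3) $D=\delta(Z,X,\nu)$; (A4) conditional on $(X,Z,\nu)$, the $(U_d)_d$ are identically distributed; (A5) observables are $Y:=Y_D,D,X,Z$. Everything is conditional on $X=x$, suppressed. $f_{d,z}(y):=\frac{\partial^p}{\partial y_1\cdots\partial y_p}\mathbb P(Y\le y,D=d\mid Z=z)$ (Lebesgue density of $B\mapsto\mathbb P(Y\in B,D=d\mid Z=z)$ on $\mathbb R^p$). $\mathcal Y_d$ is the support of the law of $Y_d$.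 $\overline\lambda>\underline\lambda>0$ are fixed constants. Assumption 2: $q^\ast\in(C^2(\mathcal U;\mathbb R^p))^2$ with each $Dq_d^\ast$ symmetric positive definite and eigenvalues in $(\underline\lambda,\overline\lambda)$. Assumption 3: each $\mathcal Y_d$ is convex compact with piecewise $C^2$ boundary. Assumption 4: $f_{d,z}$ is continuously differentiable on $\mathcal Y_d$ (up to the boundary). *)

theory Defs
  imports "HOL-Probability.Probability"
begin

definition support_of :: "'a::topological_space measure \<Rightarrow> 'a set" where
  "support_of M = {x. \<forall>S. open S \<longrightarrow> x \<in> S \<longrightarrow> emeasure M S > 0}"

definition C1_on :: "'a::euclidean_space set \<Rightarrow> ('a \<Rightarrow> 'b::real_normed_vector) \<Rightarrow> bool" where
  "C1_on S f \<longleftrightarrow> (\<exists>Df::'a \<Rightarrow> ('a \<Rightarrow>\<^sub>L 'b).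
      (\<forall>x\<in>S. (f has_derivative blinfun_apply (Df x)) (at x within S)) \<and> continuous_on S Df)"

definition C2_on :: "'a::euclidean_space set \<Rightarrow> ('a \<Rightarrow> 'b::real_normed_vector) \<Rightarrow> bool" where
  "C2_on S f \<longleftrightarrow> (\<exists>Df::'a \<Rightarrow> ('a \<Rightarrow>\<^sub>L 'b).
      (\<forall>x\<in>S. (f has_derivative blinfun_apply (Df x)) (at x within S)) \<and> C1_on S Df)"

text \<open>Piecewise C^1 / C^2 boundary: the boundary is a finite union of compact pieces of
  regular C^k hypersurfaces (zero sets of C^k functions with non-vanishing derivative).\<close>
definition piecewise_C1_boundary :: "'a::euclidean_space set \<Rightarrow> bool" where
  "piecewise_C1_boundary S \<longleftrightarrow> (\<exists>(n::nat) V (g::nat \<Rightarrow> 'a \<Rightarrow> real) K.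
      (\<forall>i<n. open (V i) \<and> C1_on (V i) (g i)
          \<and> (\<forall>x\<in>V i. \<forall>Dg. (g i has_derivative Dg) (at x) \<longrightarrow> Dg \<noteq> (\<lambda>h. 0))
          \<and> compact (K i) \<and> K i \<subseteq> {x\<in>V i. g i x = 0})
      \<and> frontier S = (\<Union>i<n. K i))"

definition piecewise_C2_boundary :: "'a::euclidean_space set \<Rightarrow> bool" where
  "piecewise_C2_boundary S \<longleftrightarrow> (\<exists>(n::nat) V (g::nat \<Rightarrow> 'a \<Rightarrow> real) K.
      (\<forall>i<n. open (V i) \<and> C2_on (V i) (g i)
          \<and> (\<forall>x\<in>V i. \<forall>Dg. (g i has_derivative Dg) (at x) \<longrightarrow> Dg \<noteq> (\<lambda>h. 0))
          \<and> compact (K i) \<and> K i \<subseteq> {x\<in>V i. g i x = 0})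
      \<and> frontier S = (\<Union>i<n. K i))"

definition sym_pd_eig_between :: "real \<Rightarrow> real \<Rightarrow> ('a::euclidean_space \<Rightarrow>\<^sub>L 'a) \<Rightarrow> bool" where
  "sym_pd_eig_between a b L \<longleftrightarrow>
     (\<forall>v w. blinfun_apply L v \<bullet> w = v \<bullet> blinfun_apply L w)
   \<and> (\<forall>v. v \<noteq> 0 \<longrightarrow> blinfun_apply L v \<bullet> v > 0)
   \<and> (\<forall>l v. v \<noteq> 0 \<longrightarrow> blinfun_apply L v = l *\<^sub>R v \<longrightarrow> a < l \<and> l < b)"

definition cond_ident_distr :: "'o measure \<Rightarrow> 'o measure \<Rightarrow> ('o \<Rightarrow> 'a::topological_space)
    \<Rightarrow> ('o \<Rightarrow> 'a) \<Rightarrow> bool" where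
  "cond_ident_distr M F X1 X2 \<longleftrightarrow> (\<forall>A\<in>sets borel. AE \<omega> in M.
      real_cond_exp M F (\<lambda>\<omega>. indicator A (X1 \<omega>)) \<omega> = real_cond_exp M F (\<lambda>\<omega>. indicator A (X2 \<omega>)) \<omega>)"

end

theory Submission
  imports Defs
begin


lemma support_null:
  fixes N :: "'b::euclidean_space measure"
  assumes "sets N = sets borel"
  shows "emeasure N (- support_of N) = 0"
proof -
  let ?F = "{S. open S \<and> emeasure N S = 0}"
  have eq: "- support_of N = \<Union>?F"
    unfolding support_of_def by (auto simp: not_less)
  obtain F' where F': "F' \<subseteq> ?F" "countable F'" "\<Union>F' = \<Union>?F"
    using Lindelof[of ?F] by auto
  have "(\<Union>S\<in>F'. S) \<in> null_sets N"
    apply (rule null_sets_UN'[OF F'(2)])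
    using F'(1) assms by (auto simp: null_sets_def)
  then show ?thesis using eq F'(3) by auto
qed

lemma distr_pos:
  assumes "emeasure (distr M borel g) A \<noteq> 0" "B \<in> sets borel"
  shows "emeasure (distr M borel g) B = emeasure M (g -` B \<inter> space M)"
  using assms unfolding distr_def emeasure_measure_of_conv
  by (auto simp: sets.sigma_sets_eq split: if_splits)

lemma lborel_null_negligible: "N \<in> null_sets lborel \<Longrightarrow> negligible N"
  unfolding negligible_iff_null_sets by (rule null_sets_completionI)

lemma borel_negligible_null: "N \<in> sets borel \<Longrightarrow> negligible N \<Longrightarrow> N \<in> null_sets lborel"
  unfolding negligible_iff_null_sets
  by (metis null_sets_completion_iff sets_lborel)

lemma AE_open_contra:
  fixes P :: "'b::euclidean_space \<Rightarrow> bool"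
  assumes "AE x in lborel. P x" "open G" "G \<noteq> {}" "\<And>x. x \<in> G \<Longrightarrow> \<not> P x"
  shows False
proof -
  obtain N where N: "{x. \<not> P x} \<subseteq> N" "N \<in> null_sets lborel"
    using assms(1) by (auto elim!: AE_E simp: space_lborel null_sets_def)
  have "negligible N" by (rule lborel_null_negligible[OF N(2)])
  have "G \<subseteq> N" using N(1) assms(4) by blast
  then have "negligible G" using \<open>negligible N\<close> negligible_subset by blast
  then show False using open_not_negligible assms(2,3) by blast
qed



lemma pd_min:
  fixes Dq :: "'a::euclidean_space \<Rightarrow> ('a \<Rightarrow>\<^sub>L 'a)"
  assumes "compact U" "continuous_on U Dq"
    "\<forall>u\<in>U. \<forall>x. x \<noteq> 0 \<longrightarrow> blinfun_apply (Dq u) x \<bullet> x > 0"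
  shows "\<exists>c>0. \<forall>u\<in>U. \<forall>x. c * (norm x)^2 \<le> blinfun_apply (Dq u) x \<bullet> x"
proof (cases "U = {}")
  case True then show ?thesis by (auto intro: exI[of _ 1])
next
  case False
  let ?K = "U \<times> sphere (0::'a) 1"
  let ?phi = "\<lambda>p. blinfun_apply (Dq (fst p)) (snd p) \<bullet> snd p"
  have "compact ?K" using assms(1) by (simp add: compact_Times)
  moreover have "?K \<noteq> {}" using False by (auto simp: sphere_def intro: exI[of _ "SOME b. b \<in> (Basis::'a set)"])
  moreover have "continuous_on ?K ?phi"
    by (intro continuous_intros continuous_on_compose2[OF assms(2)]) auto
  ultimately obtain p where p: "p \<in> ?K" "\<forall>r\<in>?K. ?phi p \<le> ?phi r"
    using continuous_attains_inf by blast
  have "fst p \<in> U" "snd p \<noteq> 0" using p(1) by (auto simp: mem_Times_iff)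
  then have c: "?phi p > 0" using assms(3) by blast
  show ?thesis
  proof (intro exI[of _ "?phi p"] conjI c ballI allI)
    fix u x assume u: "u \<in> U"
    show "?phi p * (norm x)^2 \<le> blinfun_apply (Dq u) x \<bullet> x"
    proof (cases "x = 0")
      case True then show ?thesis by simp
    next
      case False
      let ?y = "x /\<^sub>R norm x"
      have "(u, ?y) \<in> ?K" using u False by auto
      then have "?phi p \<le> blinfun_apply (Dq u) ?y \<bullet> ?y" using p(2) by (metis fst_conv snd_conv)
      also have "\<dots> = (blinfun_apply (Dq u) x \<bullet> x) / (norm x)^2"
        by (simp add: blinfun.scaleR_right power2_eq_square field_simps)
      finally show ?thesis using False by (simp add: field_simps)
    qed
  qed
qed

lemma lower_lip:
  fixes q :: "'a::euclidean_space \<Rightarrow> 'a"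
  assumes "convex U" "compact U"
    "\<forall>u\<in>U. (q has_derivative blinfun_apply (Dq u)) (at u within U)" "continuous_on U Dq"
    "\<forall>u\<in>U. \<forall>x. x \<noteq> 0 \<longrightarrow> blinfun_apply (Dq u) x \<bullet> x > 0"
  shows "\<exists>c>0. \<forall>u\<in>U. \<forall>v\<in>U. c * norm (u - v) \<le> norm (q u - q v)"
proof -
  obtain c where c: "c > 0" "\<forall>u\<in>U. \<forall>x. c * (norm x)^2 \<le> blinfun_apply (Dq u) x \<bullet> x"
    using pd_min[OF assms(2,4,5)] by blast
  show ?thesis
  proof (intro exI[of _ c] conjI c(1) ballI)
    fix u v assume u: "u \<in> U" and v: "v \<in> U"
    show "c * norm (u - v) \<le> norm (q u - q v)"
    proof (cases "u = v")
      case True then show ?thesis by simp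
    next
      case False
      define w where "w = u - v"
      define l where "l = (\<lambda>t::real. v + t *\<^sub>R w)"
      have lU: "l t \<in> U" if "0 \<le> t" "t \<le> 1" for t
      proof -
        have "l t = (1 - t) *\<^sub>R v + t *\<^sub>R u" by (simp add: l_def w_def algebra_simps)
        then show ?thesis using assms(1) u v that by (simp add: convex_alt)
      qed
      have der: "((\<lambda>t. q (l t) \<bullet> w) has_derivative (\<lambda>s. blinfun_apply (Dq (l t)) (s *\<^sub>R w) \<bullet> w)) (at t within {0..1})"
        if "0 \<le> t" "t \<le> 1" for t
      proof -
        have l': "(l has_derivative (\<lambda>s. s *\<^sub>R w)) (at t within {0..1})"
          unfolding l_def by (auto intro!: derivative_eq_intros)
        have "(q has_derivative blinfun_apply (Dq (l t))) (at (l t) within U)"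
          using assms(3) lU that by blast
        then have "(q has_derivative blinfun_apply (Dq (l t))) (at (l t) within (l ` {0..1}))"
          by (rule has_derivative_subset) (use lU in auto)
        from diff_chain_within[OF l' this]
        have "((q \<circ> l) has_derivative (blinfun_apply (Dq (l t)) \<circ> (\<lambda>s. s *\<^sub>R w))) (at t within {0..1})" .
        from has_derivative_inner_left[OF this, of w] show ?thesis by (simp add: o_def)
      qed
      obtain t where t: "t \<in> {0<..<1}"
        and eq: "q (l 1) \<bullet> w - q (l 0) \<bullet> w = blinfun_apply (Dq (l t)) ((1 - 0) *\<^sub>R w) \<bullet> w"
        using mvt_simple[of 0 1 "\<lambda>t. q (l t) \<bullet> w" "\<lambda>t s. blinfun_apply (Dq (l t)) (s *\<^sub>R w) \<bullet> w"] der
        by auto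
      have "l 1 = u" "l 0 = v" by (auto simp: l_def w_def)
      then have "(q u - q v) \<bullet> w = blinfun_apply (Dq (l t)) w \<bullet> w" using eq by (simp add: inner_diff_left)
      moreover have "c * (norm w)^2 \<le> blinfun_apply (Dq (l t)) w \<bullet> w"
        using c(2) lU t by auto
      moreover have "(q u - q v) \<bullet> w \<le> norm (q u - q v) * norm w" by (rule norm_cauchy_schwarz)
      ultimately have "c * (norm w) * norm w \<le> norm (q u - q v) * norm w" by (simp add: power2_eq_square)
      moreover have "norm w > 0" using False by (simp add: w_def)
      ultimately show ?thesis by (simp add: w_def)
    qed
  qed
qed



lemma support_not_negligible:
  fixes M :: "'o measure" and V :: "'o \<Rightarrow> 'a::euclidean_space" and q :: "'a \<Rightarrow> 'a"
  assumes M: "prob_space M" and V: "V \<in> borel_measurable M"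
    and mu: "sets \<mu> = sets borel" "absolutely_continuous lborel \<mu>" "support_of \<mu> = U"
            "distr M borel V = \<mu>"
    and U: "closed U" and qc: "continuous_on U q"
    and c: "c > 0" "\<forall>u\<in>U. \<forall>v\<in>U. c * norm (u - v) \<le> norm (q u - q v)"
    and y0: "y0 \<in> support_of (distr M borel (\<lambda>\<omega>. q (V \<omega>)))"
    and Yc: "closed (support_of (distr M borel (\<lambda>\<omega>. q (V \<omega>))))"
  shows "\<not> negligible (support_of (distr M borel (\<lambda>\<omega>. q (V \<omega>))))"
proof
  define \<nu> where "\<nu> = distr M borel (\<lambda>\<omega>. q (V \<omega>))"
  define Y where "Y = support_of \<nu>"
  assume neg: "negligible (support_of (distr M borel (\<lambda>\<omega>. q (V \<omega>))))"
  then have negY: "negligible Y" by (simp add: Y_def \<nu>_def)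
  interpret prob_space M by (rule M)
  have ne: "emeasure (distr M borel (\<lambda>\<omega>. q (V \<omega>))) UNIV \<noteq> 0" using y0 unfolding support_of_def by auto
  have nuB: "emeasure \<nu> B = emeasure M ((\<lambda>\<omega>. q (V \<omega>)) -` B \<inter> space M)" if "B \<in> sets borel" for B
    unfolding \<nu>_def by (rule distr_pos[OF ne that])
  have sn: "sets \<nu> = sets borel" by (simp add: \<nu>_def)
  have n0: "emeasure \<nu> (-Y) = 0" unfolding Y_def by (rule support_null[OF sn])
  have n1: "emeasure \<nu> UNIV = 1" using nuB[of UNIV] by (simp add: emeasure_space_1)
  have YB: "Y \<in> sets borel" using Yc by (simp add: Y_def \<nu>_def)
  have "emeasure \<nu> Y + emeasure \<nu> (-Y) = emeasure \<nu> (Y \<union> -Y)"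
    by (rule plus_emeasure) (use YB sn in auto)
  then have "emeasure \<nu> Y = 1" using n0 n1 by simp
  then have G1: "emeasure M ((\<lambda>\<omega>. q (V \<omega>)) -` Y \<inter> space M) = 1" using nuB[OF YB] by simp
  then have G1s: "(\<lambda>\<omega>. q (V \<omega>)) -` Y \<inter> space M \<in> sets M"
    using emeasure_notin_sets by fastforce
  have "emeasure \<mu> (-U) = 0" using support_null[OF mu(1)] mu(3) by simp
  then have "emeasure M (V -` (-U) \<inter> space M) = 0"
    using mu(4) emeasure_distr[OF V, of "-U"] U by auto
  moreover have "V -` (-U) \<inter> space M \<in> sets M" using V U by measurable
  ultimately have G2n: "V -` (-U) \<inter> space M \<in> null_sets M" by auto
  define T where "T = U \<inter> q -` Y"
  have Tc: "closed T" unfolding T_def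
    by (rule continuous_closed_preimage[OF qc U]) (use Yc in \<open>simp add: Y_def \<nu>_def\<close>)
  then have TB: "T \<in> sets borel" by simp
  have "V -` T \<inter> space M = ((\<lambda>\<omega>. q (V \<omega>)) -` Y \<inter> space M) - (V -` (-U) \<inter> space M)"
    by (auto simp: T_def)
  then have "emeasure M (V -` T \<inter> space M) = 1"
    using emeasure_Diff_null_set[OF G2n G1s] G1 by simp
  then have muT: "emeasure \<mu> T = 1" using mu(4) emeasure_distr[OF V TB] by simp
  have inj: "inj_on q U"
  proof (rule inj_onI)
    fix u v assume "u \<in> U" "v \<in> U" "q u = q v"
    then have "c * norm (u - v) \<le> 0" using c(2) by fastforce
    then show "u = v" using c(1) by (simp add: mult_le_0_iff)
  qed
  have "negligible (inv_into U q ` (q ` T))"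
  proof (rule negligible_locally_Lipschitz_image)
    show "negligible (q ` T)" by (rule negligible_subset[OF negY]) (auto simp: T_def)
    fix x assume x: "x \<in> q ` T"
    then obtain a where a: "a \<in> T" "x = q a" by auto
    show "\<exists>T' B. open T' \<and> x \<in> T' \<and> (\<forall>y\<in>q ` T \<inter> T'. norm (inv_into U q y - inv_into U q x) \<le> B * norm (y - x))"
    proof (intro exI[of _ UNIV] exI[of _ "1/c"] conjI ballI)
      fix y assume "y \<in> q ` T \<inter> UNIV"
      then obtain b where b: "b \<in> T" "y = q b" by auto
      have aU: "a \<in> U" and bU: "b \<in> U" using a b by (auto simp: T_def)
      have "inv_into U q y = b" "inv_into U q x = a" using inj aU bU a b by auto
      moreover have "c * norm (b - a) \<le> norm (q b - q a)" using c(2) aU bU by blast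
      ultimately show "norm (inv_into U q y - inv_into U q x) \<le> 1 / c * norm (y - x)"
        using c(1) a b by (simp add: field_simps)
    qed auto
  qed auto
  moreover have "inv_into U q ` (q ` T) = T" using inj by (auto simp: T_def)
  ultimately have "negligible T" by simp
  then have "T \<in> null_sets lborel" using borel_negligible_null TB by blast
  then have "T \<in> null_sets \<mu>" using mu(2) unfolding absolutely_continuous_def by auto
  then show False using muT by auto
qed



theorem mainTheorem12:
  fixes M :: "'o measure" and N :: "'v measure"
    and \<mu> :: "'a::euclidean_space measure" and \<U> :: "'a set"
    and U :: "nat \<Rightarrow> 'o \<Rightarrow> 'a" and Z :: "'o \<Rightarrow> nat" and \<nu> :: "'o \<Rightarrow> 'v"
    and \<delta> :: "nat \<Rightarrow> 'v \<Rightarrow> nat"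
    and q :: "nat \<Rightarrow> 'a \<Rightarrow> 'a" and Dq :: "nat \<Rightarrow> 'a \<Rightarrow> ('a \<Rightarrow>\<^sub>L 'a)"
    and f :: "nat \<Rightarrow> nat \<Rightarrow> 'a \<Rightarrow> real"
    and lam_lo lam_hi :: real
  defines "D \<equiv> (\<lambda>\<omega>. \<delta> (Z \<omega>) (\<nu> \<omega>))"
    and "Y \<equiv> (\<lambda>\<omega>. q (\<delta> (Z \<omega>) (\<nu> \<omega>)) (U (\<delta> (Z \<omega>) (\<nu> \<omega>)) \<omega>))"
    and "\<Y> \<equiv> (\<lambda>d. support_of (distr M borel (\<lambda>\<omega>. q d (U d \<omega>))))"
  assumes M: "prob_space M"
    and lam: "0 < lam_lo" "lam_lo < lam_hi"
    and U_set: "compact \<U>" "convex \<U>" "piecewise_C1_boundary \<U>"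
    and mu: "sets \<mu> = sets borel" "prob_space \<mu>" "absolutely_continuous lborel \<mu>"
            "support_of \<mu> = \<U>"
    and A1: "\<forall>d\<in>{0,1}. U d \<in> borel_measurable M \<and> distr M borel (U d) = \<mu>"
    and Z_meas: "Z \<in> measurable M (count_space UNIV)" "\<forall>\<omega>\<in>space M. Z \<omega> \<in> {0,1}"
    and A2: "\<forall>d\<in>{0,1}. \<forall>A\<in>sets borel. \<forall>B::nat set.
               measure M {\<omega>\<in>space M. U d \<omega> \<in> A \<and> Z \<omega> \<in> B}
               = measure M {\<omega>\<in>space M. U d \<omega> \<in> A} * measure M {\<omega>\<in>space M. Z \<omega> \<in> B}"
    and A3: "\<nu> \<in> measurable M N"
            "(\<lambda>(z,v). \<delta> z v) \<in> measurable (count_space UNIV \<Otimes>\<^sub>M N) (count_space UNIV)"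
            "\<forall>z\<in>{0,1}. \<forall>v\<in>space N. \<delta> z v \<in> {0,1}"
    and A4: "cond_ident_distr M
               (vimage_algebra (space M) (\<lambda>\<omega>. (Z \<omega>, \<nu> \<omega>)) (count_space UNIV \<Otimes>\<^sub>M N))
               (U 0) (U 1)"
    and As2: "\<forall>d\<in>{0,1}. (\<forall>u\<in>\<U>. (q d has_derivative blinfun_apply (Dq d u)) (at u within \<U>))
               \<and> C1_on \<U> (Dq d) \<and> (\<forall>u\<in>\<U>. sym_pd_eig_between lam_lo lam_hi (Dq d u))"
    and As3: "\<forall>d\<in>{0,1}. compact (\<Y> d) \<and> convex (\<Y> d) \<and> piecewise_C2_boundary (\<Y> d)"
    and Zpos: "\<forall>z\<in>{0,1}. measure M {\<omega>\<in>space M. Z \<omega> = z} > 0"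
    and dens: "\<forall>d\<in>{0,1}. \<forall>z\<in>{0,1}. f d z \<in> borel_measurable borel \<and> (\<forall>y. f d z y \<ge> 0)
               \<and> (\<forall>B\<in>sets borel.
                    ennreal (measure M {\<omega>\<in>space M. Y \<omega> \<in> B \<and> D \<omega> = d \<and> Z \<omega> = z}
                             / measure M {\<omega>\<in>space M. Z \<omega> = z})
                    = (\<integral>\<^sup>+ y. indicator B y * ennreal (f d z y) \<partial>lborel))
               \<and> (\<forall>y. y \<notin> \<Y> d \<longrightarrow> f d z y = 0)"
    and As4: "\<forall>d\<in>{0,1}. \<forall>z\<in>{0,1}. C1_on (\<Y> d) (f d z)"
    and ineq: "AE y in (lborel :: ('a \<times> 'a) measure).
                 fst y \<in> \<Y> 0 \<and> snd y \<in> \<Y> 1 \<longrightarrow>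
                 4 * f 0 0 (fst y) * f 1 1 (snd y)
                   > (lam_hi / lam_lo) ^ (DIM('a) + 1) * (f 0 1 (fst y) + f 1 0 (snd y))\<^sup>2"
  shows "\<forall>d\<in>{0,1}. \<Y> d = (\<Union>z\<in>{0,1}. closure {y. f d z y > 0})"
proof -
  interpret P: prob_space M by (rule M)
  have Ucl: "closed \<U>" using U_set(1) by (rule compact_imp_closed)
  have qcont: "continuous_on \<U> (q d)" if "d \<in> {0,1}" for d
    using As2 that has_derivative_continuous_on[of \<U> "q d" "\<lambda>u. blinfun_apply (Dq d u)"] by blast
  have LL: "\<exists>c>0. \<forall>u\<in>\<U>. \<forall>v\<in>\<U>. c * norm (u - v) \<le> norm (q d u - q d v)" if d: "d \<in> {0,1}" for d
  proof (rule lower_lip[OF U_set(2,1)])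
    show "\<forall>u\<in>\<U>. (q d has_derivative blinfun_apply (Dq d u)) (at u within \<U>)" using As2 d by blast
    obtain DD where "\<forall>x\<in>\<U>. (Dq d has_derivative blinfun_apply (DD x)) (at x within \<U>)"
      using As2 d unfolding C1_on_def by blast
    then show "continuous_on \<U> (Dq d)" using has_derivative_continuous_on[of \<U> "Dq d" "\<lambda>u. blinfun_apply (DD u)"] by blast
    show "\<forall>u\<in>\<U>. \<forall>x. x \<noteq> 0 \<longrightarrow> 0 < blinfun_apply (Dq d u) x \<bullet> x"
      using As2 d unfolding sym_pd_eig_between_def by blast
  qed
  have fnn: "f d z x \<ge> 0" if "d \<in> {0,1}" "z \<in> {0,1}" for d z x
    using dens that by blast
  have fout: "f d z x = 0" if "d \<in> {0,1}" "z \<in> {0,1}" "x \<notin> \<Y> d" for d z x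
    using dens that by blast
  have fint: "ennreal (measure M {\<omega>\<in>space M. Y \<omega> \<in> B \<and> D \<omega> = d \<and> Z \<omega> = z}
                             / measure M {\<omega>\<in>space M. Z \<omega> = z})
                    = (\<integral>\<^sup>+ y. indicator B y * ennreal (f d z y) \<partial>lborel)"
    if "d \<in> {0,1}" "z \<in> {0,1}" "B \<in> sets borel" for d z B
    using dens that by blast
  have Ycl: "closed (\<Y> d)" if "d \<in> {0,1}" for d using As3 that compact_imp_closed by blast
  have intY: "interior (\<Y> d) \<noteq> {}" if d: "d \<in> {0,1}" and ne: "\<Y> d \<noteq> {}" for d
  proof -
    obtain y0 where y0: "y0 \<in> \<Y> d" using ne by blast
    obtain c where c: "c > 0" "\<forall>u\<in>\<U>. \<forall>v\<in>\<U>. c * norm (u - v) \<le> norm (q d u - q d v)"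
      using LL[OF d] by blast
    have "\<not> negligible (support_of (distr M borel (\<lambda>\<omega>. q d (U d \<omega>))))"
      apply (rule support_not_negligible[OF M _ mu(1,3,4) _ Ucl qcont[OF d] c, of "U d" y0])
      using A1 d y0 Ycl[OF d] by (auto simp: \<Y>_def)
    then have "\<not> negligible (\<Y> d)" by (simp add: \<Y>_def)
    then show ?thesis using negligible_convex_interior As3 d by blast
  qed
  have UnullM: "U d -` (-\<U>) \<inter> space M \<in> null_sets M" if d: "d \<in> {0,1}" for d
  proof -
    have Ud: "U d \<in> borel_measurable M" "distr M borel (U d) = \<mu>" using A1 d by auto
    have "emeasure \<mu> (-\<U>) = 0" using support_null[OF mu(1)] mu(4) by simp
    then have "emeasure M (U d -` (-\<U>) \<inter> space M) = 0"
      using Ud emeasure_distr[OF Ud(1), of "-\<U>"] Ucl by auto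
    moreover have "U d -` (-\<U>) \<inter> space M \<in> sets M" using Ud(1) Ucl by measurable
    ultimately show ?thesis by auto
  qed
  have ZN: "(\<lambda>\<omega>. (Z \<omega>, \<nu> \<omega>)) \<in> measurable M (count_space UNIV \<Otimes>\<^sub>M N)"
    using Z_meas(1) A3(1) by (rule measurable_Pair)
  have Dmeas: "D \<in> measurable M (count_space UNIV)"
    using measurable_comp[OF ZN A3(2)] by (simp add: D_def o_def)
  have Dval: "D \<omega> \<in> {0,1}" if "\<omega> \<in> space M" for \<omega>
  proof -
    have "Z \<omega> \<in> {0,1}" "\<nu> \<omega> \<in> space N" using Z_meas(2) that measurable_space[OF A3(1) that] by auto
    then have "\<delta> (Z \<omega>) (\<nu> \<omega>) \<in> {0,1}" using A3(3) by blast
    then show ?thesis by (simp add: D_def)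
  qed
  have Dset: "{\<omega>\<in>space M. D \<omega> = k} \<in> sets M" for k using Dmeas by measurable
  have Zset: "{\<omega>\<in>space M. Z \<omega> = k} \<in> sets M" for k using Z_meas(1) by measurable
  have DZset: "{\<omega>\<in>space M. D \<omega> = k \<and> Z \<omega> = z} \<in> sets M" for k z using Dmeas Z_meas(1) by measurable
  have YD: "Y \<omega> = q d (U d \<omega>)" if "D \<omega> = d" for \<omega> d using that by (simp add: Y_def D_def)
  have sub: "closure {y. f d z y > 0} \<subseteq> \<Y> d" if "d \<in> {0,1}" "z \<in> {0,1}" for d z
    apply (rule closure_minimal[OF _ Ycl[OF that(1)]])
    using fout[OF that] by (metis less_irrefl mem_Collect_eq subsetI)
  have key: "y \<in> closure {x. f d 0 x > 0} \<union> closure {x. f d 1 x > 0}"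
    if d: "d \<in> {0,1}" and y: "y \<in> \<Y> d" for d y
  proof -
    define e where "e = 1 - d"
    have e: "e \<in> {0,1}" "e \<noteq> d" "\<And>k. k \<in> {0,1} \<Longrightarrow> k \<noteq> e \<Longrightarrow> k = d" using d by (auto simp: e_def)
    have intYd: "interior (\<Y> d) \<noteq> {}" using intY[OF d] y by blast
    show ?thesis
    proof (cases "interior (\<Y> e) = {}")
      case False
      have "y \<in> closure {x. f d d x > 0}"
      proof (rule ccontr)
        assume "y \<notin> closure {x. f d d x > 0}"
        then obtain r where r: "r > 0" "ball y r \<subseteq> - closure {x. f d d x > 0}"
          using open_contains_ball_eq[of "- closure {x. f d d x > 0}" y] by auto
        have f0: "f d d x = 0" if "x \<in> ball y r" for x
        proof -
          have "x \<notin> {x. f d d x > 0}" using r(2) that closure_subset[of "{x. f d d x > 0}"] by blast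
          then show ?thesis using fnn[OF d d, of x] by simp
        qed
        have "y \<in> closure (interior (\<Y> d))"
          using convex_closure_interior[OF _ intYd] As3 d y closure_subset by blast
        then have W: "ball y r \<inter> interior (\<Y> d) \<noteq> {}"
          using open_Int_closure_eq_empty[of "ball y r" "interior (\<Y> d)"] r(1) centre_in_ball[of y r]
          by (metis IntI empty_iff open_ball)
        have rhs: "0 \<le> (lam_hi / lam_lo) ^ (DIM('a) + 1) * (f 0 1 a + f 1 0 b)\<^sup>2" for a b
          using lam by simp
        show False
        proof (cases "d = 0")
          case True
          then have e1: "e = 1" by (simp add: e_def)
          show False
          proof (rule AE_open_contra[OF ineq, of "(ball y r \<inter> interior (\<Y> 0)) \<times> interior (\<Y> 1)"])
            show "open ((ball y r \<inter> interior (\<Y> 0)) \<times> interior (\<Y> 1))" by (intro open_Times) auto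
            show "(ball y r \<inter> interior (\<Y> 0)) \<times> interior (\<Y> 1) \<noteq> {}" using W False True e1 by auto
            fix p assume p: "p \<in> (ball y r \<inter> interior (\<Y> 0)) \<times> interior (\<Y> 1)"
            then have "f 0 0 (fst p) = 0" using f0 True by (auto simp: mem_Times_iff)
            then show "\<not> (fst p \<in> \<Y> 0 \<and> snd p \<in> \<Y> 1 \<longrightarrow>
                 4 * f 0 0 (fst p) * f 1 1 (snd p)
                   > (lam_hi / lam_lo) ^ (DIM('a) + 1) * (f 0 1 (fst p) + f 1 0 (snd p))\<^sup>2)"
              using p rhs[of "fst p" "snd p"] interior_subset by (auto simp: mem_Times_iff)
          qed
        next
          case False
          then have d1: "d = 1" and e0: "e = 0" using d by (auto simp: e_def)
          show False
          proof (rule AE_open_contra[OF ineq, of "interior (\<Y> 0) \<times> (ball y r \<inter> interior (\<Y> 1))"])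
            show "open (interior (\<Y> 0) \<times> (ball y r \<inter> interior (\<Y> 1)))" by (intro open_Times) auto
            show "interior (\<Y> 0) \<times> (ball y r \<inter> interior (\<Y> 1)) \<noteq> {}"
              using W \<open>interior (\<Y> e) \<noteq> {}\<close> d1 e0 by auto
            fix p assume p: "p \<in> interior (\<Y> 0) \<times> (ball y r \<inter> interior (\<Y> 1))"
            then have "f 1 1 (snd p) = 0" using f0 d1 by (auto simp: mem_Times_iff)
            then show "\<not> (fst p \<in> \<Y> 0 \<and> snd p \<in> \<Y> 1 \<longrightarrow>
                 4 * f 0 0 (fst p) * f 1 1 (snd p)
                   > (lam_hi / lam_lo) ^ (DIM('a) + 1) * (f 0 1 (fst p) + f 1 0 (snd p))\<^sup>2)"
              using p rhs[of "fst p" "snd p"] interior_subset by (auto simp: mem_Times_iff)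
          qed
        qed
      qed
      then show ?thesis using d by auto
    next
      case True
      have negYe: "negligible (\<Y> e)" using negligible_convex_interior As3 e(1) True by blast
      have Yenull: "\<Y> e \<in> null_sets lborel"
        using borel_negligible_null[OF _ negYe] Ycl[OF e(1)] by simp
      have DZ0: "measure M {\<omega>\<in>space M. D \<omega> = e \<and> Z \<omega> = z} = 0" if z: "z \<in> {0,1}" for z
      proof -
        have AE0: "AE y in lborel. indicator UNIV y * ennreal (f e z y) = 0"
          using AE_not_in[OF Yenull] by (rule AE_mp) (auto simp: fout[OF e(1) z])
        have "(\<integral>\<^sup>+ y. indicator UNIV y * ennreal (f e z y) \<partial>lborel) = 0"
          using nn_integral_cong_AE[OF AE0] by simp
        then have "ennreal (measure M {\<omega>\<in>space M. Y \<omega> \<in> UNIV \<and> D \<omega> = e \<and> Z \<omega> = z}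
                             / measure M {\<omega>\<in>space M. Z \<omega> = z}) = 0"
          using fint[OF e(1) z, of UNIV] by simp
        then have "measure M {\<omega>\<in>space M. D \<omega> = e \<and> Z \<omega> = z} = 0 \<or> measure M {\<omega>\<in>space M. Z \<omega> = z} = 0"
          by simp
        then show ?thesis using Zpos z by fastforce
      qed
      have "{\<omega>\<in>space M. D \<omega> = e} = {\<omega>\<in>space M. D \<omega> = e \<and> Z \<omega> = 0} \<union> {\<omega>\<in>space M. D \<omega> = e \<and> Z \<omega> = 1}"
        using Z_meas(2) by auto
      then have "measure M {\<omega>\<in>space M. D \<omega> = e} \<le> measure M {\<omega>\<in>space M. D \<omega> = e \<and> Z \<omega> = 0} + measure M {\<omega>\<in>space M. D \<omega> = e \<and> Z \<omega> = 1}"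
        using measure_Un_le[OF DZset DZset] by simp
      then have "measure M {\<omega>\<in>space M. D \<omega> = e} = 0" using DZ0[of 0] DZ0[of 1] measure_nonneg[of M "{\<omega>\<in>space M. D \<omega> = e}"] by (simp add: antisym)
      then have Dnull: "{\<omega>\<in>space M. D \<omega> = e} \<in> null_sets M"
        using Dset P.emeasure_eq_measure by (auto simp: null_sets_def)
      have "y \<in> closure {x. f d 0 x > 0}"
      proof (rule ccontr)
        assume "y \<notin> closure {x. f d 0 x > 0}"
        then obtain r where r: "r > 0" "ball y r \<subseteq> - closure {x. f d 0 x > 0}"
          using open_contains_ball_eq[of "- closure {x. f d 0 x > 0}" y] by auto
        have f0: "f d 0 x = 0" if "x \<in> ball y r" for x
        proof -
          have "x \<notin> {x. f d 0 x > 0}" using r(2) that closure_subset[of "{x. f d 0 x > 0}"] by blast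
          then show ?thesis using fnn[OF d, of 0 x] by simp
        qed
        let ?B = "ball y r"
        let ?g = "\<lambda>\<omega>. q d (U d \<omega>)"
        have pos: "emeasure (distr M borel ?g) ?B > 0" using y r(1) unfolding \<Y>_def support_of_def by auto
        then have ne: "emeasure (distr M borel ?g) ?B \<noteq> 0" by simp
        define X where "X = ?g -` ?B \<inter> space M"
        have eX: "emeasure M X > 0" using pos distr_pos[OF ne, of ?B] by (simp add: X_def)
        then have Xs: "X \<in> sets M" using emeasure_notin_sets by fastforce
        define A where "A = \<U> - (\<U> \<inter> q d -` (- ?B))"
        have AB: "A \<in> sets borel" unfolding A_def
          using continuous_closed_preimage[OF qcont[OF d] Ucl, of "- ?B"] Ucl
          by (intro sets.Diff borel_closed) (auto simp: closed_Compl)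
        have "U d -` A \<inter> space M = X - (U d -` (-\<U>) \<inter> space M)" by (auto simp: A_def X_def)
        then have eX': "emeasure M (U d -` A \<inter> space M) > 0"
          using emeasure_Diff_null_set[OF UnullM[OF d] Xs] eX by simp
        have Ud: "U d \<in> borel_measurable M" using A1 d by auto
        have X's: "U d -` A \<inter> space M \<in> sets M" using Ud AB by measurable
        have "measure M (U d -` A \<inter> space M) > 0"
          using eX' X's P.emeasure_eq_measure by auto
        moreover have "measure M {\<omega>\<in>space M. U d \<omega> \<in> A \<and> Z \<omega> \<in> {0}}
            = measure M {\<omega>\<in>space M. U d \<omega> \<in> A} * measure M {\<omega>\<in>space M. Z \<omega> \<in> {0}}"
          using A2 d AB by blast
        moreover have "{\<omega>\<in>space M. U d \<omega> \<in> A} = U d -` A \<inter> space M" by auto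
        ultimately have S2pos: "measure M {\<omega>\<in>space M. U d \<omega> \<in> A \<and> Z \<omega> = 0} > 0"
          using Zpos by simp
        define S1 where "S1 = {\<omega>\<in>space M. Y \<omega> \<in> ?B \<and> D \<omega> = d \<and> Z \<omega> = 0}"
        have "S1 = X \<inter> {\<omega>\<in>space M. D \<omega> = d} \<inter> {\<omega>\<in>space M. Z \<omega> = 0}"
          using YD by (auto simp: S1_def X_def)
        then have S1s: "S1 \<in> sets M" using Xs Dset Zset by auto
        have S2s: "{\<omega>\<in>space M. U d \<omega> \<in> A \<and> Z \<omega> = 0} \<in> sets M" using Ud AB Z_meas(1) by measurable
        have "{\<omega>\<in>space M. U d \<omega> \<in> A \<and> Z \<omega> = 0} - {\<omega>\<in>space M. D \<omega> = e} \<subseteq> S1"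
        proof
          fix \<omega> assume w: "\<omega> \<in> {\<omega>\<in>space M. U d \<omega> \<in> A \<and> Z \<omega> = 0} - {\<omega>\<in>space M. D \<omega> = e}"
          then have "D \<omega> = d" using Dval e(3) by blast
          then show "\<omega> \<in> S1" using w YD[of \<omega> d] by (auto simp: S1_def A_def)
        qed
        then have "measure M ({\<omega>\<in>space M. U d \<omega> \<in> A \<and> Z \<omega> = 0} - {\<omega>\<in>space M. D \<omega> = e}) \<le> measure M S1"
          using S1s by (intro P.finite_measure_mono) auto
        then have S1pos: "measure M S1 > 0"
          using measure_Diff_null_set[OF S2s Dnull] S2pos by simp
        have z0: "indicator ?B x * ennreal (f d 0 x) = 0" for x
          by (cases "x \<in> ?B") (simp_all add: f0)
        have "(\<integral>\<^sup>+ x. indicator ?B x * ennreal (f d 0 x) \<partial>lborel) = 0"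
          by (simp only: z0) simp
        then have "ennreal (measure M S1 / measure M {\<omega>\<in>space M. Z \<omega> = 0}) = 0"
          using fint[OF d, of 0 ?B] unfolding S1_def by simp
        then have "measure M S1 = 0 \<or> measure M {\<omega>\<in>space M. Z \<omega> = 0} = 0" by simp
        then show False using S1pos Zpos by fastforce
      qed
      then show ?thesis by auto
    qed
  qed
  show ?thesis
  proof
    fix d :: nat assume d: "d \<in> {0,1}"
    show "\<Y> d = (\<Union>z\<in>{0,1}. closure {y. f d z y > 0})"
    proof
      show "\<Y> d \<subseteq> (\<Union>z\<in>{0,1}. closure {y. f d z y > 0})" using key[OF d] by auto
      show "(\<Union>z\<in>{0,1}. closure {y. f d z y > 0}) \<subseteq> \<Y> d" using sub d by auto
    qed
  qed
qed


end
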